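(* Let $\mathbf{A},\mathbf{B}\in\mathbb{C}$ be constants and let $\mathcal{U},\mathcal{V},\mathcal{W},\mathcal{H}$ be as in the context. Then the system $$\frac{d\vartheta_2}{d\tau}=\frac i\pi\Big\{\eta+\frac{\pi^2}{12}(\vartheta_3^4+\vartheta_4^4)\Big\}\vartheta_2,\quad\frac{d\vartheta_3}{d\tau}=\mathcal U,\quad\frac{d\vartheta_4}{d\tau}=\mathcal V,\quad\frac{d\eta}{d\tau}=\mathcal W$$ can be written (where $\mathcal H\ne0$) in the gradient form $$\frac{d}{d\tau}\begin{pmatrix}\vartheta_2\\\vartheta_3\\\vartheta_4\\\eta\end{pmatrix}=\Omega(\vartheta,\eta)\begin{pmatrix}\mathcal H_{\vartheta_2}\\\mathcal H_{\vartheta_3}\\\mathcal H_{\vartheta_4}\\\mathcal H_\eta\end{pmatrix},\qquad \Omega(\vartheta,\eta)=\frac{\vartheta_2}{4\mathcal H}\begin{pmatrix}0&\mathcal U&\mathcal V&\mathcal W\\-\mathcal U&0&0&0\\-\mathcal V&0&0&0\\-\mathcal W&0&0&0\end{pmatrix},$$ with Hamilton function $\mathcal H$; the corresponding Poisson bracket $\Omega$ is degenerate ($\det\Omega\equiv0$) but single-valued.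
   Context: $\mathcal U=\frac i\pi\{\eta+\frac{\pi^2}{12}(\vartheta_3^4+\vartheta_4^4-3\mathbf B^4\vartheta_4^4)\}\vartheta_3$, $\mathcal V=\frac i\pi\{\eta+\frac{\pi^2}{12}(\vartheta_3^4+\vartheta_4^4-3\mathbf A^4\vartheta_3^4)\}\vartheta_4$, $\mathcal W=\frac i\pi2\eta^2-\frac{\pi^3}{72}i\{\vartheta_3^8+(9\mathbf A^4\mathbf B^4-6\mathbf A^4-6\mathbf B^4+2)\vartheta_3^4\vartheta_4^4+\vartheta_4^8\}$, and $\mathcal H(\vartheta_2,\vartheta_3,\vartheta_4,\eta)=\mathbf A^4\frac{\vartheta_3^4}{\vartheta_2^4}-\mathbf B^4\frac{\vartheta_4^4}{\vartheta_2^4}$. Subscripts on $\mathcal H$ denote partial derivatives. *)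

theory Defs
  imports Complex_Main "HOL-Analysis.Derivative" "Jordan_Normal_Form.Determinant"
begin

text \<open>Right-hand sides of the system; the variables are
  t2 = theta_2, t3 = theta_3, t4 = theta_4, e = eta; A, B are the constants.\<close>

definition F2 :: "complex \<Rightarrow> complex \<Rightarrow> complex \<Rightarrow> complex \<Rightarrow> complex" where
  "F2 t2 t3 t4 e = (\<i> / of_real pi) * (e + (of_real pi)^2 / 12 * (t3^4 + t4^4)) * t2"

definition Ucal :: "complex \<Rightarrow> complex \<Rightarrow> complex \<Rightarrow> complex \<Rightarrow> complex \<Rightarrow> complex" where
  "Ucal A B t3 t4 e = (\<i> / of_real pi) *
     (e + (of_real pi)^2 / 12 * (t3^4 + t4^4 - 3 * B^4 * t4^4)) * t3"

definition Vcal :: "complex \<Rightarrow> complex \<Rightarrow> complex \<Rightarrow> complex \<Rightarrow> complex \<Rightarrow> complex" where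
  "Vcal A B t3 t4 e = (\<i> / of_real pi) *
     (e + (of_real pi)^2 / 12 * (t3^4 + t4^4 - 3 * A^4 * t3^4)) * t4"

definition Wcal :: "complex \<Rightarrow> complex \<Rightarrow> complex \<Rightarrow> complex \<Rightarrow> complex \<Rightarrow> complex" where
  "Wcal A B t3 t4 e = (\<i> / of_real pi) * 2 * e^2
     - (of_real pi)^3 / 72 * \<i> *
       (t3^8 + (9 * A^4 * B^4 - 6 * A^4 - 6 * B^4 + 2) * t3^4 * t4^4 + t4^8)"

definition Hcal :: "complex \<Rightarrow> complex \<Rightarrow> complex \<Rightarrow> complex \<Rightarrow> complex \<Rightarrow> complex \<Rightarrow> complex" where
  "Hcal A B t2 t3 t4 e = A^4 * t3^4 / t2^4 - B^4 * t4^4 / t2^4"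

definition gradH :: "complex \<Rightarrow> complex \<Rightarrow> complex \<Rightarrow> complex \<Rightarrow> complex \<Rightarrow> complex \<Rightarrow> complex vec" where
  "gradH A B t2 t3 t4 e = vec_of_list
     [deriv (\<lambda>x. Hcal A B x t3 t4 e) t2,
      deriv (\<lambda>x. Hcal A B t2 x t4 e) t3,
      deriv (\<lambda>x. Hcal A B t2 t3 x e) t4,
      deriv (\<lambda>x. Hcal A B t2 t3 t4 x) e]"

definition Omega :: "complex \<Rightarrow> complex \<Rightarrow> complex \<Rightarrow> complex \<Rightarrow> complex \<Rightarrow> complex \<Rightarrow> complex mat" where
  "Omega A B t2 t3 t4 e =
     (let U = Ucal A B t3 t4 e; V = Vcal A B t3 t4 e; W = Wcal A B t3 t4 e;
          c = t2 / (4 * Hcal A B t2 t3 t4 e)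
      in c \<cdot>\<^sub>m mat_of_rows_list 4
           [[0, U, V, W], [-U, 0, 0, 0], [-V, 0, 0, 0], [-W, 0, 0, 0]])"

definition sysField :: "complex \<Rightarrow> complex \<Rightarrow> complex \<Rightarrow> complex \<Rightarrow> complex \<Rightarrow> complex \<Rightarrow> complex vec" where
  "sysField A B t2 t3 t4 e = vec_of_list
     [F2 t2 t3 t4 e, Ucal A B t3 t4 e, Vcal A B t3 t4 e, Wcal A B t3 t4 e]"

end

theory Submission
  imports Defs
begin
lemma lt4: "(i::nat) < 4 \<Longrightarrow> i = 0 \<or> i = 1 \<or> i = 2 \<or> i = 3" by auto
lemma sum4: "(\<Sum>j\<in>{0..<4::nat}. f j) = f 0 + f 1 + f 2 + (f 3::'a::comm_monoid_add)"
  by (simp add: numeral_eq_Suc add.assoc)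
lemma mrl_idx: "i < length rs \<Longrightarrow> j < nc \<Longrightarrow> mat_of_rows_list nc rs $$ (i,j) = rs ! i ! j"
  unfolding mat_of_rows_list_def by simp
lemma mrl_dims: "dim_row (mat_of_rows_list nc rs) = length rs" "dim_col (mat_of_rows_list nc rs) = nc"
  unfolding mat_of_rows_list_def by simp_all
lemma mv_idx: "i < dim_row M \<Longrightarrow> dim_col M = 4 \<Longrightarrow> dim_vec x = 4 \<Longrightarrow>
   (M *\<^sub>v x) $ i = M $$ (i,0) * x $ 0 + M $$ (i,1) * x $ 1 + M $$ (i,2) * x $ 2 + M $$ (i,3) * x $ 3"
  by (simp add: scalar_prod_def sum4)
lemma mv4:
  fixes a0 a1 a2 a3 b0 b1 b2 b3 c0 c1 c2 c3 d0 d1 d2 d3 x0 x1 x2 x3 :: "'a::comm_ring_1"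
  shows "mat_of_rows_list 4 [[a0,a1,a2,a3],[b0,b1,b2,b3],[c0,c1,c2,c3],[d0,d1,d2,d3]] *\<^sub>v vec_of_list [x0,x1,x2,x3]
   = vec_of_list [a0*x0+a1*x1+a2*x2+a3*x3, b0*x0+b1*x1+b2*x2+b3*x3, c0*x0+c1*x1+c2*x2+c3*x3, d0*x0+d1*x1+d2*x2+d3*x3]"
  (is "?M *\<^sub>v ?x = ?r")
proof (rule eq_vecI)
  show "dim_vec (?M *\<^sub>v ?x) = dim_vec ?r" by (simp add: mrl_dims)
  fix i assume "i < dim_vec ?r"
  hence i4: "i < 4" by simp
  have e: "(?M *\<^sub>v ?x) $ i = ?M $$ (i,0) * x0 + ?M $$ (i,1) * x1 + ?M $$ (i,2) * x2 + ?M $$ (i,3) * x3"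
    using i4 by (subst mv_idx) (simp_all add: mrl_dims vec_of_list_index del: vec_of_list_Cons)
  show "(?M *\<^sub>v ?x) $ i = ?r $ i"
    unfolding e using lt4[OF i4] by (elim disjE) (simp_all add: mrl_idx vec_of_list_index del: vec_of_list_Cons)
qed

lemma sm4:
  fixes c a0 a1 a2 a3 b0 b1 b2 b3 d0 d1 d2 d3 e0 e1 e2 e3 :: "'a::comm_ring_1"
  shows "c \<cdot>\<^sub>m mat_of_rows_list 4 [[a0,a1,a2,a3],[b0,b1,b2,b3],[d0,d1,d2,d3],[e0,e1,e2,e3]]
   = mat_of_rows_list 4 [[c*a0,c*a1,c*a2,c*a3],[c*b0,c*b1,c*b2,c*b3],[c*d0,c*d1,c*d2,c*d3],[c*e0,c*e1,c*e2,c*e3]]"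
  (is "_ = ?R")
proof (rule eq_matI)
  show "dim_row (c \<cdot>\<^sub>m mat_of_rows_list 4 [[a0,a1,a2,a3],[b0,b1,b2,b3],[d0,d1,d2,d3],[e0,e1,e2,e3]]) = dim_row ?R"
    by (simp add: mrl_dims)
  show "dim_col (c \<cdot>\<^sub>m mat_of_rows_list 4 [[a0,a1,a2,a3],[b0,b1,b2,b3],[d0,d1,d2,d3],[e0,e1,e2,e3]]) = dim_col ?R"
    by (simp add: mrl_dims)
  fix i j assume i: "i < dim_row ?R" and j: "j < dim_col ?R"
  hence i4: "i < 4" and j4: "j < 4" by (simp_all add: mrl_dims)
  show "(c \<cdot>\<^sub>m mat_of_rows_list 4 [[a0,a1,a2,a3],[b0,b1,b2,b3],[d0,d1,d2,d3],[e0,e1,e2,e3]]) $$ (i, j) = ?R $$ (i, j)"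
    using lt4[OF i4] lt4[OF j4] by (elim disjE) (simp_all add: mrl_idx mrl_dims)
qed

lemma v0: "vec_of_list [0,0,0,0::'a::zero] = 0\<^sub>v 4"
  by (rule eq_vecI) (auto simp: vec_of_list_index dest!: lt4 simp del: vec_of_list_Cons)

lemma det_M: "det (mat_of_rows_list 4 [[0, U, V, W], [-U, 0, 0, 0], [-V, 0, 0, 0], [-W, 0, 0, 0::complex]]) = 0"
proof -
  let ?M = "mat_of_rows_list 4 [[0, U, V, W], [-U, 0, 0, 0], [-V, 0, 0, 0], [-W, 0, 0, 0::complex]]"
  have c: "?M \<in> carrier_mat 4 4" proof (rule carrier_matI)
    show "dim_row ?M = 4" by (simp add: mrl_dims)
    show "dim_col ?M = 4" by (simp add: mrl_dims)
  qed
  show ?thesis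
  proof (cases "U = 0")
    case True
    let ?v = "vec_of_list [0,1,0,0::complex]"
    have "?v $ 1 = 1" by (simp add: vec_of_list_index del: vec_of_list_Cons)
    hence "?v \<noteq> 0\<^sub>v 4" by (auto simp del: vec_of_list_Cons)
    moreover have "?M *\<^sub>v ?v = 0\<^sub>v 4" unfolding mv4 v0[symmetric] using True by (intro arg_cong[where f=vec_of_list]) simp
    moreover have "?v \<in> carrier_vec 4" by (rule carrier_vecI) (simp only: dim_vec_of_list, simp)
    ultimately show ?thesis using det_0_iff_vec_prod_zero_field[OF c] by blast
  next
    case False
    let ?v = "vec_of_list [0,V,-U,0::complex]"
    have "?v $ 2 = -U" by (simp add: vec_of_list_index del: vec_of_list_Cons)
    hence "?v \<noteq> 0\<^sub>v 4" using False by (auto simp del: vec_of_list_Cons)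
    moreover have "?M *\<^sub>v ?v = 0\<^sub>v 4" unfolding mv4 v0[symmetric] by (intro arg_cong[where f=vec_of_list]) simp
    moreover have "?v \<in> carrier_vec 4" by (rule carrier_vecI) (simp only: dim_vec_of_list, simp)
    ultimately show ?thesis using det_0_iff_vec_prod_zero_field[OF c] by blast
  qed
qed

lemma dH2: assumes "t2 \<noteq> 0"
  shows "deriv (\<lambda>x. Hcal A B x t3 t4 e) t2 = -4 * (A^4*t3^4 - B^4*t4^4) / t2^5"
proof (rule DERIV_imp_deriv)
  show "((\<lambda>x. Hcal A B x t3 t4 e) has_field_derivative -4 * (A^4*t3^4 - B^4*t4^4) / t2^5) (at t2)"
    unfolding Hcal_def using assms
    by (auto intro!: derivative_eq_intros simp: field_simps eval_nat_numeral)
qed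

lemma dH3: assumes "t2 \<noteq> 0" shows "deriv (\<lambda>x. Hcal A B t2 x t4 e) t3 = 4 * A^4 * t3^3 / t2^4"
proof (rule DERIV_imp_deriv)
  show "((\<lambda>x. Hcal A B t2 x t4 e) has_field_derivative 4 * A^4 * t3^3 / t2^4) (at t3)"
    unfolding Hcal_def using assms
    by (auto intro!: derivative_eq_intros simp: field_simps eval_nat_numeral)
qed

lemma dH4: assumes "t2 \<noteq> 0" shows "deriv (\<lambda>x. Hcal A B t2 t3 x e) t4 = - 4 * B^4 * t4^3 / t2^4"
proof (rule DERIV_imp_deriv)
  show "((\<lambda>x. Hcal A B t2 t3 x e) has_field_derivative - 4 * B^4 * t4^3 / t2^4) (at t4)"
    unfolding Hcal_def using assms
    by (auto intro!: derivative_eq_intros simp: field_simps eval_nat_numeral)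
qed

lemma dHe: "deriv (\<lambda>x. Hcal A B t2 t3 t4 x) e = 0"
  unfolding Hcal_def by simp

lemma keypoly: fixes p q A B e t2 t3 t4 :: complex
  shows "(A^4*t3^4 - B^4*t4^4) * (p*(e+q*(t3^4+t4^4))*t2) + (p*(e+q*(t3^4+t4^4-3*A^4*t3^4))*t4)*t4^3*B^4*t2
    = (p*(e+q*(t3^4+t4^4-3*B^4*t4^4))*t3)*t3^3*A^4*t2"
proof -
  have a: "t4*t4^3 = t4^4" "t3*t3^3 = t3^4" by (simp_all add: power_Suc[symmetric] del: power_Suc)
  show ?thesis by (simp add: a[symmetric] algebra_simps)
qed

theorem theorem9p7:
  fixes A B t2 t3 t4 e :: complex
  assumes "Hcal A B t2 t3 t4 e \<noteq> 0"
  shows "sysField A B t2 t3 t4 e = Omega A B t2 t3 t4 e *\<^sub>v gradH A B t2 t3 t4 e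
         \<and> det (Omega A B t2 t3 t4 e) = 0"
proof
  have t2: "t2 \<noteq> 0" using assms unfolding Hcal_def by auto
  define K where "K = A^4*t3^4 - B^4*t4^4"
  have HK: "Hcal A B t2 t3 t4 e = K / t2^4" unfolding Hcal_def K_def by (simp add: diff_divide_distrib)
  have K: "K \<noteq> 0" using assms HK by auto
  define c where "c = t2 / (4 * Hcal A B t2 t3 t4 e)"
  define U where "U = Ucal A B t3 t4 e"
  define V where "V = Vcal A B t3 t4 e"
  define W where "W = Wcal A B t3 t4 e"
  have Om: "Omega A B t2 t3 t4 e = c \<cdot>\<^sub>m mat_of_rows_list 4 [[0, U, V, W], [-U, 0, 0, 0], [-V, 0, 0, 0], [-W, 0, 0, 0]]"
    unfolding Omega_def c_def U_def V_def W_def Let_def ..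
  show "det (Omega A B t2 t3 t4 e) = 0"
    unfolding Om det_smult det_M by simp
  have g: "gradH A B t2 t3 t4 e = vec_of_list [-4 * K / t2^5, 4 * A^4 * t3^3 / t2^4, - 4 * B^4 * t4^3 / t2^4, 0]"
    unfolding gradH_def dH2[OF t2] dH3[OF t2] dH4[OF t2] dHe K_def ..
  have key: "K * F2 t2 t3 t4 e + V * t4^3 * B^4 * t2 = U * t3^3 * A^4 * t2"
    unfolding U_def V_def K_def Ucal_def Vcal_def F2_def by (rule keypoly)
  have key8: "K*(F2 t2 t3 t4 e*t2^8) + V*(t4^3*(B^4*t2^9)) = U*(t2*(t3^3*(A^4*t2^8)))"
  proof -
    have p9: "t2^9 = t2^8*t2" using power_add[of t2 8 1] by simp
    from key have "t2^8*(K * F2 t2 t3 t4 e + V * t4^3 * B^4 * t2) = t2^8*(U * t3^3 * A^4 * t2)" by simp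
    thus ?thesis unfolding p9 by (simp add: algebra_simps)
  qed
  have c: "c = t2^5 / (4 * K)" unfolding c_def HK using t2 by (simp add: field_simps eval_nat_numeral)
  show "sysField A B t2 t3 t4 e = Omega A B t2 t3 t4 e *\<^sub>v gradH A B t2 t3 t4 e"
    unfolding Om g sm4 mv4 sysField_def U_def[symmetric] V_def[symmetric] W_def[symmetric] c
    apply (intro arg_cong[where f=vec_of_list])
    using t2 K key8 power_add[of t2 1 8]
    apply (simp add: field_simps)
    done
qed
end
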